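(* Consider $n$ users with features $x_1,\dots,x_n\in\mathbb{R}^\ell$, nonnegative embedding weights $\widetilde{w}_{ji}\ge 0$, and any linear graph-based classifier $h=h_{\theta,b}$. If users update via the myopic best-response dynamics described below, then for every user $i\in[n]$ there is at most one round $t\ge 1$ with $x_i^{(t)}\neq x_i^{(t-1)}$.
   Context: Embeddings: $\phi(x_i;x_{-i})=\widetilde{w}_{ii}x_i+\sum_{j\neq i}\widetilde{w}_{ji}x_j$, where $x_{-i}=\{x_j\}_{j\ne i}$. Classifier: $h_{\theta,b}(x_i;x_{-i})=\mathrm{sign}(\theta^\top\phi(x_i;x_{-i})+b)\in\{\pm1\}$ with $\theta\in\mathbb{R}^\ell$, $b\in\mathbb{R}$, and $\mathrm{sign}(0)=+1$. Cost: $c(x,x')=\|x-x'\|_2$. Myopic best-response dynamics: $x_i^{(0)}=x_i$; at each round $t$ all users update concurrently by $x_i^{(t+1)}=\Delta_h(x_i^{(t)};x_{-i}^{(t)},\kappa_i^{(t)})$, where $\Delta_h(x_i;x_{-i},\kappa)=\arg\max_{x'\in\mathbb{R}^\ell} h(x';x_{-i})-c(x_i,x')-\kappa$ and $\kappa_i^{(t)}$ are accumulated costs ($\kappa_i^{(0)}=0$, $\kappa_i^{(t)}=\kappa_i^{(t-1)}+c(x_i^{(t-1)},x_i^{(t)})$). Concretely, user $i$ changes her features in a round only if she is currently classified $-1$ (given the others' current features) and there is a point $x'$ with $h(x';x_{-i})=+1$ and $c(x_i,x')\le 2$; in that case she moves to the minimum-cost such point (whose embedding lies exactly on the decision boundary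 $\theta^\top\phi+b=0$); otherwise she stays. *)

theory Defs
  imports "HOL-Analysis.Analysis"
begin

text \<open>Users are indexed by 0..<n; features live in real^'l.
  w j i is the embedding weight of user j in the embedding of user i.\<close>

definition embed :: "nat \<Rightarrow> (nat \<Rightarrow> nat \<Rightarrow> real) \<Rightarrow> (nat \<Rightarrow> real^'l) \<Rightarrow> nat \<Rightarrow> real^'l" where
  "embed n w X i = w i i *\<^sub>R X i + (\<Sum>j\<in>{..<n} - {i}. w j i *\<^sub>R X j)"

text \<open>Classifier h = sign(theta . phi + b) with sign 0 = +1, i.e. h = +1 iff the score is >= 0.\<close>
definition positive :: "nat \<Rightarrow> (nat \<Rightarrow> nat \<Rightarrow> real) \<Rightarrow> real^'l \<Rightarrow> real \<Rightarrow> (nat \<Rightarrow> real^'l) \<Rightarrow> nat \<Rightarrow> bool" where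
  "positive n w \<theta> b X i \<longleftrightarrow> \<theta> \<bullet> embed n w X i + b \<ge> 0"

definition best_response :: "nat \<Rightarrow> (nat \<Rightarrow> nat \<Rightarrow> real) \<Rightarrow> real^'l \<Rightarrow> real \<Rightarrow> (nat \<Rightarrow> real^'l) \<Rightarrow> nat \<Rightarrow> real^'l" where
  "best_response n w \<theta> b X i =
     (if \<not> positive n w \<theta> b X i \<and> (\<exists>x'. positive n w \<theta> b (X(i := x')) i \<and> dist (X i) x' \<le> 2)
      then arg_min (\<lambda>x'. dist (X i) x') (\<lambda>x'. positive n w \<theta> b (X(i := x')) i)
      else X i)"

primrec dyn :: "nat \<Rightarrow> (nat \<Rightarrow> nat \<Rightarrow> real) \<Rightarrow> real^'l \<Rightarrow> real \<Rightarrow> (nat \<Rightarrow> real^'l) \<Rightarrow> nat \<Rightarrow> (nat \<Rightarrow> real^'l)" where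
  "dyn n w \<theta> b X0 0 = X0"
| "dyn n w \<theta> b X0 (Suc t) =
     (\<lambda>i. if i < n then best_response n w \<theta> b (dyn n w \<theta> b X0 t) i else dyn n w \<theta> b X0 t i)"

end

theory Submission
  imports Defs
begin

lemma score:
  "\<theta> \<bullet> embed n w X i = w i i * (\<theta> \<bullet> X i) + (\<Sum>j\<in>{..<n} - {i}. w j i * (\<theta> \<bullet> X j))"
  unfolding embed_def by (simp add: inner_add_right inner_sum_right)

lemma pos_mono:
  assumes w: "\<forall>i<n. \<forall>j<n. w j i \<ge> 0" and i: "i < n"
    and le: "\<forall>j<n. \<theta> \<bullet> X j \<le> \<theta> \<bullet> Y j" and p: "positive n w \<theta> b X i"
  shows "positive n w \<theta> b Y i"
proof -
  have "w i i * (\<theta> \<bullet> X i) \<le> w i i * (\<theta> \<bullet> Y i)"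
    using w i le by (simp add: mult_left_mono)
  moreover have "(\<Sum>j\<in>{..<n} - {i}. w j i * (\<theta> \<bullet> X j)) \<le> (\<Sum>j\<in>{..<n} - {i}. w j i * (\<theta> \<bullet> Y j))"
    by (rule sum_mono) (use w i le in \<open>auto intro: mult_left_mono\<close>)
  ultimately show ?thesis using p unfolding positive_def score by linarith
qed

lemma pos_upd:
  "positive n w \<theta> b (X(i := y)) i \<longleftrightarrow>
   (w i i *\<^sub>R \<theta>) \<bullet> y \<ge> - ((\<Sum>j\<in>{..<n} - {i}. w j i * (\<theta> \<bullet> X j)) + b)"
proof -
  have "(\<Sum>j\<in>{..<n} - {i}. w j i * (\<theta> \<bullet> (X(i := y)) j)) = (\<Sum>j\<in>{..<n} - {i}. w j i * (\<theta> \<bullet> X j))"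
    by (rule sum.cong) auto
  then show ?thesis unfolding positive_def score by (auto simp: inner_commute)
qed

lemma br:
  assumes w: "\<forall>i<n. \<forall>j<n. w j i \<ge> 0" and i: "i < n"
  shows "best_response n w \<theta> b X i = X i \<or>
     (positive n w \<theta> b (X(i := best_response n w \<theta> b X i)) i \<and>
      \<theta> \<bullet> X i \<le> \<theta> \<bullet> best_response n w \<theta> b X i)"
proof (cases "\<not> positive n w \<theta> b X i \<and> (\<exists>x'. positive n w \<theta> b (X(i := x')) i \<and> dist (X i) x' \<le> 2)")
  case False
  have "best_response n w \<theta> b X i = X i" unfolding best_response_def by (rule if_not_P) (rule False)
  then show ?thesis by simp
next
  case True
  define P where "P = {x'. positive n w \<theta> b (X(i := x')) i}"
  have cl: "closed P" unfolding P_def pos_upd by (rule closed_halfspace_ge)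
  have ne: "P \<noteq> {}" using True P_def by auto
  obtain x where x: "x \<in> P" "\<And>y. y \<in> P \<Longrightarrow> dist (X i) x \<le> dist (X i) y"
    using distance_attains_inf[OF cl ne] by blast
  have pa: "positive n w \<theta> b (X(i := arg_min (\<lambda>x'. dist (X i) x') (\<lambda>x'. positive n w \<theta> b (X(i := x')) i))) i"
    apply (rule arg_minI[where P="\<lambda>x'. positive n w \<theta> b (X(i := x')) i" and x=x and Q="\<lambda>y. positive n w \<theta> b (X(i := y)) i"])
    using x P_def by (auto simp: not_less)
  define y where "y = arg_min (\<lambda>x'. dist (X i) x') (\<lambda>x'. positive n w \<theta> b (X(i := x')) i)"
  have by_: "best_response n w \<theta> b X i = y" unfolding best_response_def y_def using True by simp
  have py: "positive n w \<theta> b (X(i := y)) i" using pa y_def by simp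
  have "\<theta> \<bullet> X i \<le> \<theta> \<bullet> y"
  proof (rule ccontr)
    assume "\<not> ?thesis"
    hence "w i i * (\<theta> \<bullet> y) \<le> w i i * (\<theta> \<bullet> X i)" using w i by (simp add: mult_left_mono)
    moreover have "X(i := X i) = X" by simp
    ultimately have "positive n w \<theta> b X i" using py pos_upd[of n w \<theta> b X i y] pos_upd[of n w \<theta> b X i "X i"]
      by (auto simp: inner_commute)
    then show False using True by simp
  qed
  then show ?thesis using by_ py by simp
qed

lemma dyn_mono:
  assumes w: "\<forall>i<n. \<forall>j<n. w j i \<ge> 0" and j: "j < n"
  shows "\<theta> \<bullet> dyn n w \<theta> b X0 t j \<le> \<theta> \<bullet> dyn n w \<theta> b X0 (Suc t) j"
  using br[OF w j, of \<theta> b "dyn n w \<theta> b X0 t"] j by auto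

lemma dyn_mono2:
  assumes w: "\<forall>i<n. \<forall>j<n. w j i \<ge> 0" and j: "j < n" and "s \<le> t"
  shows "\<theta> \<bullet> dyn n w \<theta> b X0 s j \<le> \<theta> \<bullet> dyn n w \<theta> b X0 t j"
  using assms(3)
proof (induction t)
  case 0 then show ?case by simp
next
  case (Suc t)
  show ?case
  proof (cases "s = Suc t")
    case False
    then have "s \<le> t" using Suc by simp
    then show ?thesis using Suc.IH dyn_mono[OF w j, of \<theta> b X0 t] by linarith
  qed simp
qed

lemma changed_pos:
  assumes w: "\<forall>i<n. \<forall>j<n. w j i \<ge> 0" and i: "i < n"
    and ch: "dyn n w \<theta> b X0 (Suc t) i \<noteq> dyn n w \<theta> b X0 t i"
  shows "positive n w \<theta> b (dyn n w \<theta> b X0 (Suc t)) i"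
proof -
  let ?X = "dyn n w \<theta> b X0 t"
  have e: "dyn n w \<theta> b X0 (Suc t) i = best_response n w \<theta> b ?X i" using i by simp
  have p: "positive n w \<theta> b (?X(i := dyn n w \<theta> b X0 (Suc t) i)) i"
    using br[OF w i, of \<theta> b ?X] ch e by auto
  show ?thesis
    apply (rule pos_mono[OF w i _ p])
    using dyn_mono[OF w, of _ \<theta> b X0 t] by (auto simp del: dyn.simps)
qed

lemma stays:
  assumes w: "\<forall>i<n. \<forall>j<n. w j i \<ge> 0" and i: "i < n"
    and ch: "dyn n w \<theta> b X0 (Suc t) i \<noteq> dyn n w \<theta> b X0 t i"
    and s: "Suc t \<le> s"
  shows "dyn n w \<theta> b X0 (Suc s) i = dyn n w \<theta> b X0 s i"
proof -
  have "positive n w \<theta> b (dyn n w \<theta> b X0 s) i"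
    apply (rule pos_mono[OF w i _ changed_pos[OF w i ch]])
    using dyn_mono2[OF w _ s, of _ \<theta> b X0] by (auto simp del: dyn.simps)
  then show ?thesis using i by (simp add: best_response_def)
qed

theorem proposition1:
  fixes n :: nat and X0 :: "nat \<Rightarrow> real^'l" and w :: "nat \<Rightarrow> nat \<Rightarrow> real"
    and \<theta> :: "real^'l" and b :: real
  assumes "\<forall>i<n. \<forall>j<n. w j i \<ge> 0"
  shows "\<forall>i<n. \<forall>t1\<ge>1. \<forall>t2\<ge>1.
           dyn n w \<theta> b X0 t1 i \<noteq> dyn n w \<theta> b X0 (t1 - 1) i \<and>
           dyn n w \<theta> b X0 t2 i \<noteq> dyn n w \<theta> b X0 (t2 - 1) i \<longrightarrow> t1 = t2"
proof (intro allI impI)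
  fix i t1 t2
  assume i: "i < n" and t1: "t1 \<ge> 1" and t2: "t2 \<ge> 1"
    and c: "dyn n w \<theta> b X0 t1 i \<noteq> dyn n w \<theta> b X0 (t1 - 1) i \<and>
           dyn n w \<theta> b X0 t2 i \<noteq> dyn n w \<theta> b X0 (t2 - 1) i"
  obtain a where a: "t1 = Suc a" using t1 by (cases t1) auto
  obtain d where d: "t2 = Suc d" using t2 by (cases t2) auto
  have ca: "dyn n w \<theta> b X0 (Suc a) i \<noteq> dyn n w \<theta> b X0 a i" using c a by simp
  have cd: "dyn n w \<theta> b X0 (Suc d) i \<noteq> dyn n w \<theta> b X0 d i" using c d by simp
  show "t1 = t2"
  proof (rule ccontr)
    assume "t1 \<noteq> t2"
    then have "a < d \<or> d < a" using a d by auto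
    then show False
    proof
      assume "a < d" then show False using stays[OF assms i ca, of d] cd by simp
    next
      assume "d < a" then show False using stays[OF assms i cd, of a] ca by simp
    qed
  qed
qed

end
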